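(* For a random set of $n$ source symbols and a corresponding regular IBLT with $m$ coded symbols, the probability that the peeling decoder can recover at least one source symbol decreases exponentially in $n/m$.
   Context: A regular IBLT with parameters $m,k$ consists of $m$ coded symbols; each source symbol is mapped to $k$ of the $m$ coded symbols chosen uniformly at random (independently for different source symbols). The peeling decoder repeatedly finds a pure coded symbol (one with exactly one not-yet-recovered source symbol mapped to it), recovers that source symbol, and removes it from all coded symbols it is mapped to, stopping when no pure coded symbol remains; in particular it recovers nothing if initially no coded symbol is pure. *)

theory Defs
  imports "HOL-Probability.Probability"
begin

text \<open>Source symbols are indexed by 0..<n, coded symbols by 0..<m.
  A mapping h assigns to each source symbol i the set h i of the k coded
  symbols it is mapped to.\<close>

definition cell_choice_pmf :: "nat \<Rightarrow> nat \<Rightarrow> nat set pmf" where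
  "cell_choice_pmf m k = pmf_of_set {S. S \<subseteq> {..<m} \<and> card S = k}"

definition iblt_pmf :: "nat \<Rightarrow> nat \<Rightarrow> nat \<Rightarrow> (nat \<Rightarrow> nat set) pmf" where
  "iblt_pmf n m k = Pi_pmf {..<n} {} (\<lambda>_. cell_choice_pmf m k)"

text \<open>Set of source symbols recovered by the peeling decoder: source i is
  recovered iff it lies in some coded symbol j all of whose other source
  symbols have already been recovered (then j becomes pure with i as its
  only not-yet-recovered source symbol). This least fixed point is exactly
  the output of the peeling decoder (which is independent of the order of
  peeling).\<close>
inductive_set peel_recovered :: "nat \<Rightarrow> (nat \<Rightarrow> nat set) \<Rightarrow> nat set"
  for n :: nat and h :: "nat \<Rightarrow> nat set" where
  peel: "i < n \<Longrightarrow> j \<in> h i \<Longrightarrow>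
         (\<forall>i'<n. i' \<noteq> i \<and> j \<in> h i' \<longrightarrow> i' \<in> peel_recovered n h) \<Longrightarrow>
         i \<in> peel_recovered n h"

definition prob_recover_some :: "nat \<Rightarrow> nat \<Rightarrow> nat \<Rightarrow> real" where
  "prob_recover_some n m k =
     measure_pmf.prob (iblt_pmf n m k) {h. peel_recovered n h \<noteq> {}}"

end

theory Submission
  imports Defs
begin

lemma pure_exists:
  assumes "x \<in> peel_recovered n h"
  shows "\<exists>i j. i < n \<and> j \<in> h i \<and> (\<forall>i'<n. i' \<noteq> i \<longrightarrow> j \<notin> h i')"
  using assms
proof (induction rule: peel_recovered.induct)
  case (peel i j)
  show ?case
  proof (cases "\<exists>i'<n. i' \<noteq> i \<and> j \<in> h i'")
    case True
    then show ?thesis using peel by blast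
  next
    case False
    then show ?thesis using peel by blast
  qed
qed

definition Sk :: "nat \<Rightarrow> nat \<Rightarrow> nat set set" where
  "Sk m k = {S. S \<subseteq> {..<m} \<and> card S = k}"

lemma Sk_fin: "finite (Sk m k)"
  unfolding Sk_def by (rule finite_subset[of _ "Pow {..<m}"]) auto

lemma Sk_ne: "k \<le> m \<Longrightarrow> Sk m k \<noteq> {}"
proof -
  assume "k \<le> m"
  then have "{..<k} \<in> Sk m k" unfolding Sk_def by auto
  then show ?thesis by blast
qed

lemma avoid_prob:
  assumes "k \<le> m" "j < m"
  shows "measure_pmf.prob (cell_choice_pmf m k) {S. j \<notin> S} = (real m - real k) / real m"
proof -
  have cc: "cell_choice_pmf m k = pmf_of_set (Sk m k)" unfolding cell_choice_pmf_def Sk_def by simp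
  have c1: "card (Sk m k) = m choose k" unfolding Sk_def using n_subsets[of "{..<m}" k] by simp
  have "Sk m k \<inter> {S. j \<notin> S} = {S. S \<subseteq> {..<m} - {j} \<and> card S = k}"
    unfolding Sk_def by auto
  then have c2: "card (Sk m k \<inter> {S. j \<notin> S}) = (m - 1) choose k"
    using n_subsets[of "{..<m} - {j}" k] assms by simp
  have pos: "m choose k > 0" using assms by simp
  have "real ((m - k) * (m choose k)) = real (m * ((m - 1) choose k))"
    using binomial_absorb_comp[of m k] by simp
  then have "real (m - 1 choose k) = (real m - real k) * real (m choose k) / real m"
    using assms by (simp add: of_nat_diff field_simps)
  then show ?thesis
    unfolding cc using Sk_fin[of m k] Sk_ne[OF assms(1)] pos
    by (simp add: measure_pmf_of_set c1 c2)
qed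


lemma analytic:
  fixes m n k :: nat
  assumes "1 \<le> k" "k \<le> m"
  shows "real m * real n * ((real m - real k) / real m) ^ (n - 1)
         \<le> 2 * real m ^ 2 * exp 1 * exp (- (1/2) * (real n / real m))"
proof (cases "n = 0")
  case True then show ?thesis by simp
next
  case False
  have mpos: "real m > 0" using assms by simp
  define q where "q = (real m - real k) / real m"
  have q0: "q \<ge> 0" unfolding q_def using assms by simp
  have "q \<le> 1 - 1 / real m" unfolding q_def using assms mpos by (simp add: field_simps)
  also have "\<dots> \<le> exp (- (1 / real m))" using exp_ge_add_one_self[of "- (1 / real m)"] by simp
  finally have qe: "q \<le> exp (- (1 / real m))" .
  have "q ^ (n - 1) \<le> exp (- (1 / real m)) ^ (n - 1)" using qe q0 by (rule power_mono)
  also have "\<dots> = exp (real (n - 1) * (- (1 / real m)))" by (simp only: exp_of_nat_mult)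
  also have "\<dots> = exp (1 / real m) * exp (- (real n / real m))"
    using False mpos by (simp add: of_nat_diff diff_divide_distrib flip: exp_add)
  finally have qb: "q ^ (n - 1) \<le> exp (1 / real m) * exp (- (real n / real m))" .
  have e1: "exp (1 / real m) \<le> exp 1" using assms by (simp add: divide_le_eq_1)
  have "real n / (2 * real m) \<le> exp (real n / (2 * real m))"
    using exp_ge_add_one_self[of "real n / (2 * real m)"] by linarith
  then have nb: "real n \<le> 2 * real m * exp (real n / (2 * real m))"
    using mpos by (simp add: field_simps)
  have "real m * real n * q ^ (n - 1) \<le> real m * real n * (exp (1 / real m) * exp (- (real n / real m)))"
    using qb mpos by (intro mult_left_mono) auto
  also have "\<dots> \<le> real m * (2 * real m * exp (real n / (2 * real m))) * (exp 1 * exp (- (real n / real m)))"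
    using nb e1 mpos by (intro mult_mono) auto
  also have "\<dots> = 2 * real m ^ 2 * exp 1 * (exp (real n / (2 * real m)) * exp (- (real n / real m)))"
    by (simp add: power2_eq_square algebra_simps)
  also have "exp (real n / (2 * real m)) * exp (- (real n / real m)) = exp (- (1/2) * (real n / real m))"
    by (simp flip: exp_add add: field_simps)
  finally show ?thesis unfolding q_def .
qed


lemma prob_bound:
  fixes m n k :: nat
  assumes "1 \<le> k" "k \<le> m"
  shows "prob_recover_some n m k \<le> real m * real n * ((real m - real k) / real m) ^ (n - 1)"
proof -
  define M where "M = iblt_pmf n m k"
  define q where "q = (real m - real k) / real m"
  define F where "F = (\<lambda>(j::nat) (i::nat). Pi {..<n} (\<lambda>i'. if i' = i then UNIV else {S. j \<notin> S}))"
  have supp: "set_pmf M = PiE_dflt {..<n} {} (\<lambda>_. Sk m k)"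
    unfolding M_def iblt_pmf_def cell_choice_pmf_def
    using Sk_fin[of m k] Sk_ne[OF assms(2)]
    by (simp add: set_Pi_pmf o_def Sk_def[symmetric])
  have sub: "{h. peel_recovered n h \<noteq> {}} \<inter> set_pmf M \<subseteq> (\<Union>j\<in>{..<m}. \<Union>i\<in>{..<n}. F j i)"
  proof
    fix h assume h: "h \<in> {h. peel_recovered n h \<noteq> {}} \<inter> set_pmf M"
    then obtain x where "x \<in> peel_recovered n h" by auto
    from pure_exists[OF this] obtain i j where ij: "i < n" "j \<in> h i" "\<forall>i'<n. i' \<noteq> i \<longrightarrow> j \<notin> h i'"
      by blast
    have "h i \<in> Sk m k" using h ij(1) supp by (auto simp: PiE_dflt_def)
    then have "j < m" using ij(2) by (auto simp: Sk_def)
    moreover have "h \<in> F j i" using ij unfolding F_def by auto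
    ultimately show "h \<in> (\<Union>j\<in>{..<m}. \<Union>i\<in>{..<n}. F j i)" using ij(1) by blast
  qed
  have pF: "measure_pmf.prob M (F j i) = q ^ (n - 1)" if "j < m" "i < n" for i j
  proof -
    have "measure_pmf.prob M (F j i) =
          (\<Prod>x\<in>{..<n}. measure_pmf.prob (cell_choice_pmf m k) (if x = i then UNIV else {S. j \<notin> S}))"
      unfolding M_def iblt_pmf_def F_def by (simp add: measure_Pi_pmf_Pi)
    also have "\<dots> = (\<Prod>x\<in>{..<n}. if x = i then 1 else q)"
      using avoid_prob[OF assms(2) that(1)] unfolding q_def
      by (intro prod.cong) auto
    also have "\<dots> = q ^ (n - 1)"
    proof -
      have "{..<n} \<inter> - {i} = {..<n} - {i}" by blast
      then show ?thesis using that by (simp add: prod.If_cases card_Diff_singleton)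
    qed
    finally show ?thesis .
  qed
  have "prob_recover_some n m k = measure_pmf.prob M ({h. peel_recovered n h \<noteq> {}} \<inter> set_pmf M)"
    unfolding prob_recover_some_def M_def by (simp add: measure_Int_set_pmf)
  also have "\<dots> \<le> measure_pmf.prob M (\<Union>j\<in>{..<m}. \<Union>i\<in>{..<n}. F j i)"
    using sub by (intro measure_pmf.finite_measure_mono) auto
  also have "\<dots> \<le> (\<Sum>j\<in>{..<m}. measure_pmf.prob M (\<Union>i\<in>{..<n}. F j i))"
    by (intro measure_pmf.finite_measure_subadditive_finite) auto
  also have "\<dots> \<le> (\<Sum>j\<in>{..<m}. \<Sum>i\<in>{..<n}. measure_pmf.prob M (F j i))"
    by (intro sum_mono measure_pmf.finite_measure_subadditive_finite) auto
  also have "\<dots> = (\<Sum>j\<in>{..<m}. \<Sum>i\<in>{..<n}. q ^ (n - 1))"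
    using pF by simp
  also have "\<dots> = real m * real n * q ^ (n - 1)" by simp
  finally show ?thesis unfolding q_def .
qed

theorem theoremA1:
  fixes k :: nat
  assumes "k \<ge> 1"
  shows "\<exists>c::real. c > 0 \<and>
           (\<forall>m::nat. m \<ge> k \<longrightarrow>
              (\<exists>C::real. \<forall>n::nat.
                 prob_recover_some n m k \<le> C * exp (- c * (real n / real m))))"
proof (rule exI[of _ "1/2"], intro conjI allI impI)
  fix m :: nat assume "m \<ge> k"
  show "\<exists>C::real. \<forall>n::nat. prob_recover_some n m k \<le> C * exp (- (1/2) * (real n / real m))"
    using prob_bound[OF assms \<open>m \<ge> k\<close>] analytic[OF assms \<open>m \<ge> k\<close>]
    by (intro exI[of _ "2 * real m ^ 2 * exp 1"] allI) (blast intro: order_trans)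
qed simp

end
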